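(* Let $\alpha=\sqrt{a_{ij}y^iy^j}$ be a Riemannian metric and $\beta=b_iy^i$ a $1$-form which is closed and conformal but not parallel with respect to $\alpha$, and let $b:=\|\beta\|_\alpha$. Let $\kappa,\rho,\nu$ be functions of $b^2$ with $1-\kappa b^2>0$ and $\nu$ nowhere zero, and define $$\bar\alpha=e^{\rho(b^2)}\sqrt{\alpha^2-\kappa(b^2)\beta^2},\qquad \bar\beta=\nu(b^2)\beta.$$ Then $\bar\beta$ is closed and conformal with respect to $\bar\alpha$ if and only if $$\nu=C\sqrt{1-b^2\kappa}\,e^{2\rho}$$ for some non-zero constant $C$.
   Context: A $1$-form $\beta=b_iy^i$ is closed and conformal with respect to $\alpha=\sqrt{a_{ij}y^iy^j}$ if $b_{i|j}=c(x)a_{ij}$ for some function $c$, where $b_{i|j}$ is the covariant derivative with respect to the Levi-Civita connection of $\alpha$; it is parallel if $b_{i|j}=0$. *)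

theory Defs
  imports "HOL-Analysis.Analysis"
begin

text \<open>Local coordinate setting: an open connected coordinate domain U in R^n
  (n = CARD('n)). A Riemannian metric alpha = sqrt(a_ij y^i y^j) is given by the
  matrix-valued function a, a 1-form beta = b_i y^i by the covector field b.\<close>

definition pd :: "(real^'n \<Rightarrow> real) \<Rightarrow> 'n \<Rightarrow> real^'n \<Rightarrow> real" where
  "pd f j x = frechet_derivative f (at x) (axis j 1)"

fun pds :: "'n list \<Rightarrow> (real^'n \<Rightarrow> real) \<Rightarrow> real^'n \<Rightarrow> real" where
  "pds [] f = f"
| "pds (j # js) f = pd (pds js f) j"

definition smooth_on :: "(real^'n) set \<Rightarrow> (real^'n \<Rightarrow> real) \<Rightarrow> bool" where
  "smooth_on U f \<longleftrightarrow> (\<forall>js. pds js f differentiable_on U)"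

definition smooth_real_on :: "real set \<Rightarrow> (real \<Rightarrow> real) \<Rightarrow> bool" where
  "smooth_real_on I f \<longleftrightarrow> (\<forall>k. (deriv ^^ k) f differentiable_on I)"

definition riemannian_metric :: "(real^'n) set \<Rightarrow> (real^'n \<Rightarrow> real^'n^'n) \<Rightarrow> bool" where
  "riemannian_metric U a \<longleftrightarrow>
     (\<forall>i j. smooth_on U (\<lambda>x. a x $ i $ j)) \<and>
     (\<forall>x\<in>U. \<forall>i j. a x $ i $ j = a x $ j $ i) \<and>
     (\<forall>x\<in>U. \<forall>v. v \<noteq> 0 \<longrightarrow> v \<bullet> (a x *v v) > 0)"

definition smooth_one_form :: "(real^'n) set \<Rightarrow> (real^'n \<Rightarrow> real^'n) \<Rightarrow> bool" where
  "smooth_one_form U b \<longleftrightarrow> (\<forall>i. smooth_on U (\<lambda>x. b x $ i))"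

definition christoffel :: "(real^'n \<Rightarrow> real^'n^'n) \<Rightarrow> 'n \<Rightarrow> 'n \<Rightarrow> 'n \<Rightarrow> real^'n \<Rightarrow> real" where
  "christoffel a k i j x = (1/2) * (\<Sum>l\<in>UNIV. matrix_inv (a x) $ k $ l *
      (pd (\<lambda>y. a y $ l $ j) i x + pd (\<lambda>y. a y $ l $ i) j x - pd (\<lambda>y. a y $ i $ j) l x))"

definition covd :: "(real^'n \<Rightarrow> real^'n^'n) \<Rightarrow> (real^'n \<Rightarrow> real^'n) \<Rightarrow> 'n \<Rightarrow> 'n \<Rightarrow> real^'n \<Rightarrow> real" where
  "covd a b i j x = pd (\<lambda>y. b y $ i) j x - (\<Sum>k\<in>UNIV. christoffel a k i j x * b x $ k)"

definition closed_conformal :: "(real^'n) set \<Rightarrow> (real^'n \<Rightarrow> real^'n^'n) \<Rightarrow> (real^'n \<Rightarrow> real^'n) \<Rightarrow> bool" where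
  "closed_conformal U a b \<longleftrightarrow> (\<exists>c. \<forall>x\<in>U. \<forall>i j. covd a b i j x = c x * a x $ i $ j)"

definition parallel :: "(real^'n) set \<Rightarrow> (real^'n \<Rightarrow> real^'n^'n) \<Rightarrow> (real^'n \<Rightarrow> real^'n) \<Rightarrow> bool" where
  "parallel U a b \<longleftrightarrow> (\<forall>x\<in>U. \<forall>i j. covd a b i j x = 0)"

definition norm_sq :: "(real^'n \<Rightarrow> real^'n^'n) \<Rightarrow> (real^'n \<Rightarrow> real^'n) \<Rightarrow> real^'n \<Rightarrow> real" where
  "norm_sq a b x = b x \<bullet> (matrix_inv (a x) *v b x)"

text \<open>The deformed metric: bar alpha^2 = e^{2 rho(b^2)} (alpha^2 - kappa(b^2) beta^2),
  i.e. bar a_ij = e^{2 rho} (a_ij - kappa b_i b_j).\<close>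
definition deformed_metric ::
  "(real \<Rightarrow> real) \<Rightarrow> (real \<Rightarrow> real) \<Rightarrow> (real^'n \<Rightarrow> real^'n^'n) \<Rightarrow> (real^'n \<Rightarrow> real^'n) \<Rightarrow> real^'n \<Rightarrow> real^'n^'n" where
  "deformed_metric \<kappa> \<rho> a b x = (\<chi> i j. exp (2 * \<rho> (norm_sq a b x)) *
      (a x $ i $ j - \<kappa> (norm_sq a b x) * b x $ i * b x $ j))"

definition deformed_form :: "(real \<Rightarrow> real) \<Rightarrow> (real^'n \<Rightarrow> real^'n^'n) \<Rightarrow> (real^'n \<Rightarrow> real^'n) \<Rightarrow> real^'n \<Rightarrow> real^'n" where
  "deformed_form \<nu> a b x = \<nu> (norm_sq a b x) *\<^sub>R b x"

end

theory Submission
  imports Defs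
begin


lemma pd_has: "(f has_derivative f') (at x) \<Longrightarrow> pd f j x = f' (axis j 1)"
  unfolding pd_def by (simp add: frechet_derivative_at[symmetric])

lemma has_pd: "f differentiable (at x) \<Longrightarrow> (f has_derivative (\<lambda>h. \<Sum>j\<in>UNIV. h$j * pd f j x)) (at x)"
proof -
  assume d: "f differentiable (at x)"
  then have fd: "(f has_derivative frechet_derivative f (at x)) (at x)"
    using frechet_derivative_works by blast
  have lin: "linear (frechet_derivative f (at x))"
    using fd has_derivative_linear by blast
  have "frechet_derivative f (at x) = (\<lambda>h. \<Sum>j\<in>UNIV. h$j * pd f j x)"
  proof
    fix h :: "real^'a"
    have "frechet_derivative f (at x) h = frechet_derivative f (at x) (\<Sum>j\<in>UNIV. h$j *\<^sub>R axis j 1)"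
      using basis_expansion[of h] by (simp add: scalar_mult_eq_scaleR)
    also have "\<dots> = (\<Sum>j\<in>UNIV. h$j * frechet_derivative f (at x) (axis j 1))"
      using lin by (simp add: linear_sum linear_scale)
    finally show "frechet_derivative f (at x) h = (\<Sum>j\<in>UNIV. h$j * pd f j x)"
      by (simp add: pd_def)
  qed
  then show ?thesis using fd by simp
qed

lemma pd_add: "f differentiable (at x) \<Longrightarrow> g differentiable (at x) \<Longrightarrow>
   pd (\<lambda>y. f y + g y) j x = pd f j x + pd g j x"
proof -
  assume "f differentiable (at x)" "g differentiable (at x)"
  then obtain f' g' where f: "(f has_derivative f') (at x)" and g: "(g has_derivative g') (at x)"
    unfolding differentiable_def by blast
  have "((\<lambda>y. f y + g y) has_derivative (\<lambda>h. f' h + g' h)) (at x)" using f g by (rule has_derivative_add)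
  from pd_has[OF this] pd_has[OF f] pd_has[OF g] show ?thesis by simp
qed

lemma pd_diff: "f differentiable (at x) \<Longrightarrow> g differentiable (at x) \<Longrightarrow>
   pd (\<lambda>y. f y - g y) j x = pd f j x - pd g j x"
proof -
  assume "f differentiable (at x)" "g differentiable (at x)"
  then obtain f' g' where f: "(f has_derivative f') (at x)" and g: "(g has_derivative g') (at x)"
    unfolding differentiable_def by blast
  have "((\<lambda>y. f y - g y) has_derivative (\<lambda>h. f' h - g' h)) (at x)" using f g by (rule has_derivative_diff)
  from pd_has[OF this] pd_has[OF f] pd_has[OF g] show ?thesis by simp
qed

lemma pd_mult: "f differentiable (at x) \<Longrightarrow> g differentiable (at x) \<Longrightarrow>
   pd (\<lambda>y. f y * g y :: real) j x = f x * pd g j x + pd f j x * g x"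
proof -
  assume "f differentiable (at x)" "g differentiable (at x)"
  then obtain f' g' where f: "(f has_derivative f') (at x)" and g: "(g has_derivative g') (at x)"
    unfolding differentiable_def by blast
  have "((\<lambda>y. f y * g y) has_derivative (\<lambda>h. f x * g' h + f' h * g x)) (at x)" using f g by (rule has_derivative_mult)
  from pd_has[OF this] pd_has[OF f] pd_has[OF g] show ?thesis by simp
qed

lemma pd_const: "pd (\<lambda>y. c) j x = 0"
  by (simp add: pd_def)

lemma pd_sum: "(\<And>i. i \<in> S \<Longrightarrow> f i differentiable (at x)) \<Longrightarrow>
   pd (\<lambda>y. \<Sum>i\<in>S. f i y) j x = (\<Sum>i\<in>S. pd (f i) j x)"
proof -
  assume d: "\<And>i. i \<in> S \<Longrightarrow> f i differentiable (at x)"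
  have "\<And>i. i \<in> S \<Longrightarrow> (f i has_derivative frechet_derivative (f i) (at x)) (at x)"
    using d frechet_derivative_works by blast
  then have "((\<lambda>y. \<Sum>i\<in>S. f i y) has_derivative (\<lambda>h. \<Sum>i\<in>S. frechet_derivative (f i) (at x) h)) (at x)"
    by (rule has_derivative_sum)
  from pd_has[OF this] show ?thesis by (simp add: pd_def)
qed

lemma pd_comp: "(\<phi> has_real_derivative D) (at (f x)) \<Longrightarrow> f differentiable (at x) \<Longrightarrow>
   pd (\<lambda>y. \<phi> (f y)) j x = D * pd f j x"
proof -
  assume p: "(\<phi> has_real_derivative D) (at (f x))" and "f differentiable (at x)"
  then obtain f' where f: "(f has_derivative f') (at x)" unfolding differentiable_def by blast
  have p': "(\<phi> has_derivative (\<lambda>h. D * h)) (at (f x))"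
    using p by (simp add: has_field_derivative_def)
  have "((\<lambda>y. \<phi> (f y)) has_derivative (\<lambda>h. D * f' h)) (at x)"
    using diff_chain_at[OF f p'] by (simp add: o_def)
  from pd_has[OF this] pd_has[OF f] show ?thesis by simp
qed

lemma pd_cong_open: "open U \<Longrightarrow> x \<in> U \<Longrightarrow> (\<And>y. y \<in> U \<Longrightarrow> f y = g y) \<Longrightarrow>
   f differentiable (at x) \<Longrightarrow> pd f j x = pd g j x"
  unfolding pd_def
  by (simp add: frechet_derivative_transform_within_open[of f x U g])

lemma differentiable_prod_at:
  fixes f :: "'i \<Rightarrow> 'a::real_normed_vector \<Rightarrow> real"
  shows "(\<And>i. i \<in> S \<Longrightarrow> f i differentiable (at x)) \<Longrightarrow> (\<lambda>y. \<Prod>i\<in>S. f i y) differentiable (at x)"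
proof -
  assume "\<And>i. i \<in> S \<Longrightarrow> f i differentiable (at x)"
  then have "\<And>i. i \<in> S \<Longrightarrow> (f i has_derivative frechet_derivative (f i) (at x)) (at x)"
    using frechet_derivative_works by blast
  from has_derivative_prod[OF this] show ?thesis by (rule differentiableI)
qed

lemma det_differentiable:
  fixes M :: "real^'n \<Rightarrow> real^'m^'m"
  assumes "\<And>i j. (\<lambda>y. M y $ i $ j) differentiable (at x)"
  shows "(\<lambda>y. det (M y)) differentiable (at x)"
  unfolding det_def
  apply (rule differentiable_sum)
   apply (simp add: finite_permutations)
  apply (intro ballI differentiable_mult differentiable_const differentiable_prod_at assms)
  done

lemma matrix_inv_works: "invertible M \<Longrightarrow> M ** matrix_inv M = mat 1 \<and> matrix_inv M ** M = mat 1"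
  unfolding matrix_inv_def invertible_def by (rule someI_ex)

lemma matrix_inv_sym_apply:
  fixes M :: "real^'n^'n"
  assumes inv: "invertible M" and sym: "\<And>i j. M$i$j = M$j$i" and Mu: "M *v u = z"
  shows "(\<Sum>k\<in>UNIV. matrix_inv M $ k $ l * z $ k) = u $ l"
proof -
  let ?N = "matrix_inv M"
  have MN: "M ** ?N = mat 1" using matrix_inv_works[OF inv] by blast
  have "(\<Sum>k\<in>UNIV. ?N $ k $ l * z $ k) = (\<Sum>k\<in>UNIV. ?N $ k $ l * (\<Sum>m\<in>UNIV. M $ k $ m * u $ m))"
    by (simp add: matrix_vector_mult_def flip: Mu)
  also have "\<dots> = (\<Sum>k\<in>UNIV. \<Sum>m\<in>UNIV. M $ m $ k * ?N $ k $ l * u $ m)"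
    apply (simp only: sum_distrib_left)
    apply (intro sum.cong refl)
    subgoal for k m by (simp add: sym[of k m] mult_ac)
    done
  also have "\<dots> = (\<Sum>m\<in>UNIV. \<Sum>k\<in>UNIV. M $ m $ k * ?N $ k $ l * u $ m)"
    by (rule sum.swap)
  also have "\<dots> = (\<Sum>m\<in>UNIV. (\<Sum>k\<in>UNIV. M $ m $ k * ?N $ k $ l) * u $ m)"
    by (simp add: sum_distrib_right)
  also have "\<dots> = (\<Sum>m\<in>UNIV. (mat 1 :: real^'n^'n) $ m $ l * u $ m)"
    by (simp flip: MN add: matrix_matrix_mult_def)
  also have "\<dots> = (\<Sum>m\<in>UNIV. if m = l then u $ m else 0)"
    by (rule sum.cong) (auto simp: mat_def)
  also have "\<dots> = u $ l"
    by simp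
  finally show ?thesis .
qed

lemma alg_ds:
  fixes A D :: "'n::finite \<Rightarrow> 'n \<Rightarrow> _" and W B dW dB :: "'n \<Rightarrow> real"
  assumes symA: "\<And>i j. A i j = A j i"
    and Bd: "\<And>i. B i = (\<Sum>l\<in>UNIV. A i l * W l)"
    and dWe: "\<And>i. (\<Sum>l\<in>UNIV. D k i l * W l + A i l * dW l) = dB i"
    and H1: "\<And>i. dB i = c * A i k + 1/2 * (\<Sum>l\<in>UNIV. W l * (D i l k + D k l i - D l i k))"
  shows "(\<Sum>i\<in>UNIV. B i * dW i + dB i * W i) = 2 * c * B k"
proof -
  define Q where "Q = (\<Sum>i\<in>UNIV. \<Sum>l\<in>UNIV. W i * W l * D k l i)"
  have s1: "(\<Sum>i\<in>UNIV. B i * dW i) = (\<Sum>l\<in>UNIV. W l * (\<Sum>i\<in>UNIV. A l i * dW i))"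
  proof -
    have "(\<Sum>i\<in>UNIV. B i * dW i) = (\<Sum>i\<in>UNIV. \<Sum>l\<in>UNIV. A i l * W l * dW i)"
      by (simp add: Bd sum_distrib_right)
    also have "\<dots> = (\<Sum>l\<in>UNIV. \<Sum>i\<in>UNIV. A i l * W l * dW i)" by (rule sum.swap)
    also have "\<dots> = (\<Sum>l\<in>UNIV. W l * (\<Sum>i\<in>UNIV. A l i * dW i))"
      by (simp add: sum_distrib_left symA mult_ac)
    finally show ?thesis .
  qed
  have s2: "\<And>l. (\<Sum>i\<in>UNIV. A l i * dW i) = dB l - (\<Sum>i\<in>UNIV. D k l i * W i)"
    using dWe by (simp add: sum.distrib algebra_simps)
  have s3: "(\<Sum>l\<in>UNIV. W l * (\<Sum>i\<in>UNIV. D k l i * W i)) = Q"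
    unfolding Q_def by (subst sum.swap) (simp add: sum_distrib_left mult_ac)
  have s4: "(\<Sum>i\<in>UNIV. W i * A i k) = B k"
    by (simp add: Bd symA mult.commute)
  have sA: "(\<Sum>i\<in>UNIV. \<Sum>l\<in>UNIV. W i * W l * D i l k) = (\<Sum>i\<in>UNIV. \<Sum>l\<in>UNIV. W i * W l * D l i k)"
    by (subst sum.swap) (simp add: mult_ac)
  have s5: "(\<Sum>i\<in>UNIV. W i * dB i) = c * B k + Q / 2"
  proof -
    have "(\<Sum>i\<in>UNIV. W i * dB i) = c * (\<Sum>i\<in>UNIV. W i * A i k) + 1/2 * ((\<Sum>i\<in>UNIV. \<Sum>l\<in>UNIV. W i * W l * D i l k)
        + Q - (\<Sum>i\<in>UNIV. \<Sum>l\<in>UNIV. W i * W l * D l i k))"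
      unfolding Q_def H1
      by (simp add: sum_distrib_left sum_distrib_right sum.distrib sum_subtractf algebra_simps)
    then show ?thesis using s4 sA by simp
  qed
  have "(\<Sum>i\<in>UNIV. B i * dW i + dB i * W i) = (\<Sum>i\<in>UNIV. B i * dW i) + (\<Sum>i\<in>UNIV. W i * dB i)"
    by (simp add: sum.distrib mult.commute)
  also have "\<dots> = (\<Sum>l\<in>UNIV. W l * dB l) - Q + (c * B k + Q/2)"
    using s1 s2 s3 s5 by (simp add: right_diff_distrib sum_subtractf)
  also have "\<dots> = 2 * c * B k" using s5 by simp
  finally show ?thesis .
qed

lemma alg_main:
  fixes A D dAb :: "'n::finite \<Rightarrow> 'n \<Rightarrow> _" and W B :: "'n \<Rightarrow> real" and dB dbb :: "'n \<Rightarrow> 'n \<Rightarrow> real"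
  assumes symA: "\<And>i j. A i j = A j i"
    and Bd: "\<And>i. B i = (\<Sum>l\<in>UNIV. A i l * W l)"
    and sd: "sv = (\<Sum>l\<in>UNIV. B l * W l)"
    and H1: "\<And>i j. dB j i = c * A i j + 1/2 * (\<Sum>l\<in>UNIV. W l * (D i l j + D j l i - D l i j))"
    and cl: "\<And>i j. dB j i = dB i j"
    and Ks: "1 - K * sv \<noteq> 0" and E: "E \<noteq> 0"
    and dAb: "\<And>m p q. dAb m p q = E * (2*c*r*B m*(A p q - K*B p*B q) + D m p q - 2*c*qq*B m*B p*B q
                  - K*(dB m p*B q + B p*dB m q))"
    and dbb: "dbb i j = nn*(2*c*B j)*B i + N*dB j i"
  shows "dbb i j - 1/2 * (\<Sum>l\<in>UNIV. (N / (E * (1 - K* sv)) * W l) * (dAb i l j + dAb j l i - dAb l i j))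
     = c * (N * (1 + r* sv) / (1 - K* sv)) * (A i j - K*B i*B j)
       + c * (2*nn - 2*N*r + N*(K + sv*qq)/(1 - K* sv)) * B i * B j"
proof -
  define h where "h p q = A p q - K*B p*B q" for p q
  define T where "T l = D i l j + D j l i - D l i j" for l
  have tl: "dAb i l j + dAb j l i - dAb l i j = E * (2*c*r*(B i*h l j + B j*h l i - B l*h i j) + T l
       - 2*c*qq*B i*B j*B l - 2*K*B l*dB j i)" for l
  proof -
    have c1: "dB i l = dB l i" "dB j l = dB l j" "dB i j = dB j i" using cl by auto
    show ?thesis unfolding dAb h_def T_def using c1 by (simp add: algebra_simps)
  qed
  have sWh: "(\<Sum>l\<in>UNIV. W l * h l q) = (1 - K* sv) * B q" for q
  proof -
    have "(\<Sum>l\<in>UNIV. W l * h l q) = (\<Sum>l\<in>UNIV. A q l * W l) - K * B q * (\<Sum>l\<in>UNIV. B l * W l)"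
      unfolding h_def by (simp add: sum_subtractf sum_distrib_left symA algebra_simps)
    then show ?thesis using Bd[of q] sd by (simp add: algebra_simps)
  qed
  have sWB: "(\<Sum>l\<in>UNIV. W l * B l) = sv" using sd by (simp add: mult.commute)
  have sWT: "(\<Sum>l\<in>UNIV. W l * T l) = 2 * (dB j i - c * A i j)"
    using H1[of j i] unfolding T_def by simp
  have split: "(\<Sum>l\<in>UNIV. W l * (dAb i l j + dAb j l i - dAb l i j)) =
      (E*2*c*r*B i) * (\<Sum>l\<in>UNIV. W l * h l j) + (E*2*c*r*B j) * (\<Sum>l\<in>UNIV. W l * h l i)
      - (E*2*c*r*h i j + E*2*c*qq*B i*B j + E*2*K*dB j i) * (\<Sum>l\<in>UNIV. W l * B l)
      + E * (\<Sum>l\<in>UNIV. W l * T l)"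
  proof -
    have "(\<Sum>l\<in>UNIV. W l * (dAb i l j + dAb j l i - dAb l i j)) =
       (\<Sum>l\<in>UNIV. (E*2*c*r*B i) * (W l * h l j) + (E*2*c*r*B j) * (W l * h l i)
      - (E*2*c*r*h i j + E*2*c*qq*B i*B j + E*2*K*dB j i) * (W l * B l) + E * (W l * T l))"
      by (intro sum.cong refl) (simp add: tl algebra_simps)
    also have "\<dots> = (\<Sum>l\<in>UNIV. (E*2*c*r*B i) * (W l * h l j)) + (\<Sum>l\<in>UNIV. (E*2*c*r*B j) * (W l * h l i))
      - (\<Sum>l\<in>UNIV. (E*2*c*r*h i j + E*2*c*qq*B i*B j + E*2*K*dB j i) * (W l * B l)) + (\<Sum>l\<in>UNIV. E * (W l * T l))"
      by (simp add: sum.distrib sum_subtractf)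
    also have "\<dots> = (E*2*c*r*B i) * (\<Sum>l\<in>UNIV. W l * h l j) + (E*2*c*r*B j) * (\<Sum>l\<in>UNIV. W l * h l i)
      - (E*2*c*r*h i j + E*2*c*qq*B i*B j + E*2*K*dB j i) * (\<Sum>l\<in>UNIV. W l * B l)
      + E * (\<Sum>l\<in>UNIV. W l * T l)"
      by (simp only: sum_distrib_left)
    finally show ?thesis .
  qed
  have pull: "(\<Sum>l\<in>UNIV. (N / (E * (1 - K* sv)) * W l) * (dAb i l j + dAb j l i - dAb l i j))
     = N / (E * (1 - K* sv)) * (\<Sum>l\<in>UNIV. W l * (dAb i l j + dAb j l i - dAb l i j))"
    by (simp add: sum_distrib_left mult.assoc)
  define d where "d = 1 - K* sv"
  have d0: "d \<noteq> 0" using Ks by (simp add: d_def)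
  define X where "X = 4*c*r*B i*B j + 2*dB j i"
  define Y where "Y = 2*c*r* sv*h i j + 2*c*qq* sv*B i*B j + 2*c*A i j"
  have st: "(E*2*c*r*B i) * ((1 - K* sv) * B j) + (E*2*c*r*B j) * ((1 - K* sv) * B i)
      - (E*2*c*r*h i j + E*2*c*qq*B i*B j + E*2*K*dB j i) * sv
      + E * (2 * (dB j i - c * A i j)) = E * (d * X - Y)"
    by (simp add: d_def X_def Y_def algebra_simps)
  have st2: "N / (E * (1 - K* sv)) * (E * (d * X - Y)) = N * X - N * Y / d"
    using E d0 unfolding d_def[symmetric] by (simp add: field_simps)
  have hA: "A i j = h i j + K * B i * B j" by (simp add: h_def)
  show ?thesis
    unfolding pull split sWh sWB sWT dbb st st2
    unfolding d_def[symmetric] h_def[symmetric] X_def Y_def hA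
    using d0 by (simp add: field_simps)
qed


lemma comp_diff: "(\<phi> has_real_derivative D) (at (f x)) \<Longrightarrow> f differentiable (at x) \<Longrightarrow>
   (\<lambda>y. \<phi> (f y)) differentiable (at x)"
proof -
  assume p: "(\<phi> has_real_derivative D) (at (f x))" and f: "f differentiable (at x)"
  have "\<phi> differentiable (at (f x))"
    using p by (meson has_field_derivative_imp_has_derivative differentiableI)
  then have "(\<phi> \<circ> f) differentiable (at x)" using differentiable_chain_at[OF f] by blast
  then show ?thesis by (simp add: o_def)
qed

lemma chr_gen:
  fixes M :: "real^'n \<Rightarrow> real^'n^'n"
  assumes inv: "invertible (M x)" and sym: "\<And>i j. M x $ i $ j = M x $ j $ i" and Mu: "M x *v u = z"
  shows "(\<Sum>k\<in>UNIV. christoffel M k i j x * z $ k) =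
   1/2 * (\<Sum>l\<in>UNIV. u $ l * (pd (\<lambda>y. M y $ l $ j) i x + pd (\<lambda>y. M y $ l $ i) j x - pd (\<lambda>y. M y $ i $ j) l x))"
proof -
  define T where "T l = pd (\<lambda>y. M y $ l $ j) i x + pd (\<lambda>y. M y $ l $ i) j x - pd (\<lambda>y. M y $ i $ j) l x" for l
  define N where "N = matrix_inv (M x)"
  have "(\<Sum>k\<in>UNIV. christoffel M k i j x * z $ k) = (\<Sum>k\<in>UNIV. (1/2 * (\<Sum>l\<in>UNIV. N $ k $ l * T l)) * z $ k)"
    by (simp add: christoffel_def T_def N_def)
  also have "\<dots> = 1/2 * (\<Sum>k\<in>UNIV. \<Sum>l\<in>UNIV. N $ k $ l * z $ k * T l)"
    by (simp add: sum_distrib_left sum_distrib_right mult_ac)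
  also have "\<dots> = 1/2 * (\<Sum>l\<in>UNIV. \<Sum>k\<in>UNIV. N $ k $ l * z $ k * T l)"
    by (subst sum.swap) (rule refl)
  also have "\<dots> = 1/2 * (\<Sum>l\<in>UNIV. (\<Sum>k\<in>UNIV. N $ k $ l * z $ k) * T l)"
    by (simp add: sum_distrib_right)
  also have "\<dots> = 1/2 * (\<Sum>l\<in>UNIV. u $ l * T l)"
    unfolding N_def using matrix_inv_sym_apply[OF inv sym Mu] by simp
  finally show ?thesis by (simp add: T_def)
qed

lemma Galg: fixes R e Rt n' N M r' :: real assumes "R > 0" "e \<noteq> 0" "R*R = Rt"
  shows "((n' * (R*e) - N*((inverse R / 2 * (-M)) * e + (e*(2*r')) * R)) / ((R*e)*(R*e))) * (R*e) * 2
     = 2*n' - 2*N*(2*r') + N*M/Rt"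
  unfolding assms(3)[symmetric] using assms(1,2) by (simp add: field_simps)
lemma Palg: fixes R e Rt C M r' :: real assumes "R > 0" "R*R = Rt"
  shows "2*((C * (inverse R / 2 * (-M))) * e + (e*(2*r')) * (C*R)) - 2*(C*R*e)*(2*r') + (C*R*e)*M/Rt = 0"
  unfolding assms(2)[symmetric] using assms(1) by (simp add: field_simps)

lemma exists_orth:
  fixes B :: "real^'n"
  assumes "CARD('n) \<ge> 2"
  shows "\<exists>v. v \<noteq> 0 \<and> B \<bullet> v = 0"
proof -
  obtain p q :: 'n where pq: "p \<noteq> q"
  proof -
    have "\<not> (\<forall>p q :: 'n. p = q)"
    proof
      assume all: "\<forall>p q :: 'n. p = q"
      obtain p0 :: 'n where True by simp
      have "(UNIV :: 'n set) \<subseteq> {p0}" using all by auto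
      then have "CARD('n) \<le> 1" by (metis card_mono finite.emptyI finite_insert card_1_singleton_iff is_singleton_altdef is_singleton_the_elem card.insert card.empty One_nat_def)
      then show False using assms by simp
    qed
    then show ?thesis using that by blast
  qed
  show ?thesis
  proof (cases "B $ p = 0")
    case True
    then show ?thesis
      by (intro exI[of _ "axis p 1"]) (simp add: inner_axis axis_eq_0_iff)
  next
    case False
    define v where "v = B $ q *\<^sub>R axis p 1 - B $ p *\<^sub>R axis q (1::real)"
    have "v $ q = - B $ p" using pq by (simp add: v_def axis_def)
    then have "v \<noteq> 0" using False by auto
    moreover have "B \<bullet> v = 0" by (simp add: v_def inner_diff_right inner_axis)
    ultimately show ?thesis by blast
  qed
qed



definition wc :: "(real^'n \<Rightarrow> real^'n^'n) \<Rightarrow> (real^'n \<Rightarrow> real^'n) \<Rightarrow> real^'n \<Rightarrow> real^'n" where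
  "wc a b y = (\<chi> k. det (\<chi> i j. if j = k then b y $ i else a y $ i $ j) / det (a y))"

locale setup1 =
  fixes U :: "(real^'n) set" and a :: "real^'n \<Rightarrow> real^'n^'n" and b :: "real^'n \<Rightarrow> real^'n"
    and c :: "real^'n \<Rightarrow> real"
  assumes U: "open U"
    and a: "riemannian_metric U a"
    and b: "smooth_one_form U b"
    and cc: "\<And>x i j. x \<in> U \<Longrightarrow> covd a b i j x = c x * a x $ i $ j"
begin

lemma da: "x \<in> U \<Longrightarrow> (\<lambda>y. a y $ i $ j) differentiable (at x)"
proof -
  assume x: "x \<in> U"
  have "smooth_on U (\<lambda>x. a x $ i $ j)" using a by (simp add: riemannian_metric_def)
  then have "pds [] (\<lambda>x. a x $ i $ j) differentiable_on U" unfolding smooth_on_def by blast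
  then show ?thesis using U x by (simp add: differentiable_on_eq_differentiable_at)
qed

lemma db: "x \<in> U \<Longrightarrow> (\<lambda>y. b y $ i) differentiable (at x)"
proof -
  assume x: "x \<in> U"
  have "smooth_on U (\<lambda>x. b x $ i)" using b by (simp add: smooth_one_form_def)
  then have "pds [] (\<lambda>x. b x $ i) differentiable_on U" unfolding smooth_on_def by blast
  then show ?thesis using U x by (simp add: differentiable_on_eq_differentiable_at)
qed

lemma asym: "x \<in> U \<Longrightarrow> a x $ i $ j = a x $ j $ i"
  using a by (simp add: riemannian_metric_def)

lemma apos: "x \<in> U \<Longrightarrow> v \<noteq> 0 \<Longrightarrow> v \<bullet> (a x *v v) > 0"
  using a by (simp add: riemannian_metric_def)

lemma a_inj: "x \<in> U \<Longrightarrow> a x *v v = 0 \<Longrightarrow> v = 0"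
  using apos[of x v] by force

lemma a_inv: "x \<in> U \<Longrightarrow> invertible (a x)"
proof -
  assume x: "x \<in> U"
  have "inj ((*v) (a x))"
  proof (rule injI)
    fix u v assume "a x *v u = a x *v v"
    then have "a x *v (u - v) = 0" by (simp add: matrix_vector_mult_diff_distrib)
    then have "u - v = 0" using a_inj[OF x] by blast
    then show "u = v" by simp
  qed
  then show ?thesis using matrix_left_invertible_injective invertible_left_inverse by blast
qed

lemma det_nz: "x \<in> U \<Longrightarrow> det (a x) \<noteq> 0"
  using a_inv invertible_det_nz by blast

lemma wc_eq: "x \<in> U \<Longrightarrow> a x *v wc a b x = b x"
  using cramer[OF det_nz, of x "wc a b x" "b x"] by (simp add: wc_def)

lemma minv_wc: "x \<in> U \<Longrightarrow> matrix_inv (a x) *v b x = wc a b x"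
proof -
  assume x: "x \<in> U"
  have "a x ** matrix_inv (a x) = mat 1" using matrix_inv_works[OF a_inv[OF x]] by blast
  then have "a x *v (matrix_inv (a x) *v b x) = b x"
    by (simp add: matrix_vector_mul_assoc)
  then have "a x *v (matrix_inv (a x) *v b x - wc a b x) = 0"
    using wc_eq[OF x] by (simp add: matrix_vector_mult_diff_distrib)
  then have "matrix_inv (a x) *v b x - wc a b x = 0" using a_inj[OF x] by blast
  then show ?thesis by simp
qed

lemma dwc: "x \<in> U \<Longrightarrow> (\<lambda>y. wc a b y $ l) differentiable (at x)"
proof -
  assume x: "x \<in> U"
  have "(\<lambda>y. det (\<chi> i j. if j = l then b y $ i else a y $ i $ j)) differentiable (at x)"
    apply (rule det_differentiable)
    subgoal for i j by (cases "j = l") (simp_all add: da[OF x] db[OF x])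
    done
  moreover have "(\<lambda>y. det (a y)) differentiable (at x)"
    by (rule det_differentiable) (simp add: da[OF x])
  ultimately show ?thesis
    unfolding wc_def by (simp add: det_nz[OF x])
qed

lemma ns_eq: "x \<in> U \<Longrightarrow> norm_sq a b x = (\<Sum>i\<in>UNIV. b x $ i * wc a b x $ i)"
  by (simp add: norm_sq_def minv_wc inner_vec_def)

lemma dns: "x \<in> U \<Longrightarrow> norm_sq a b differentiable (at x)"
proof -
  assume x: "x \<in> U"
  have "(\<lambda>y. \<Sum>i\<in>UNIV. b y $ i * wc a b y $ i) differentiable (at x)"
    by (intro differentiable_sum ballI differentiable_mult db[OF x] dwc[OF x]) simp
  then obtain f' where "((\<lambda>y. \<Sum>i\<in>UNIV. b y $ i * wc a b y $ i) has_derivative f') (at x)"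
    unfolding differentiable_def by blast
  then have "(norm_sq a b has_derivative f') (at x)"
    by (rule has_derivative_transform_within_open[OF _ U x]) (simp add: ns_eq)
  then show ?thesis unfolding differentiable_def by blast
qed


lemma dwid: "x \<in> U \<Longrightarrow> (\<Sum>l\<in>UNIV. a x $ i $ l * pd (\<lambda>y. wc a b y $ l) k x + pd (\<lambda>y. a y $ i $ l) k x * wc a b x $ l)
   = pd (\<lambda>y. b y $ i) k x"
proof -
  assume x: "x \<in> U"
  have "pd (\<lambda>y. \<Sum>l\<in>UNIV. a y $ i $ l * wc a b y $ l) k x = pd (\<lambda>y. b y $ i) k x"
  proof (rule pd_cong_open[OF U x])
    fix y assume y: "y \<in> U"
    show "(\<Sum>l\<in>UNIV. a y $ i $ l * wc a b y $ l) = b y $ i"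
      using arg_cong[OF wc_eq[OF y], of "\<lambda>v. v $ i"] by (simp add: matrix_vector_mult_def)
  next
    show "(\<lambda>y. \<Sum>l\<in>UNIV. a y $ i $ l * wc a b y $ l) differentiable at x"
      by (intro differentiable_sum ballI differentiable_mult da[OF x] dwc[OF x]) simp
  qed
  moreover have "pd (\<lambda>y. \<Sum>l\<in>UNIV. a y $ i $ l * wc a b y $ l) k x
      = (\<Sum>l\<in>UNIV. pd (\<lambda>y. a y $ i $ l * wc a b y $ l) k x)"
    by (rule pd_sum) (intro differentiable_mult da[OF x] dwc[OF x])
  moreover have "\<And>l. pd (\<lambda>y. a y $ i $ l * wc a b y $ l) k x =
      a x $ i $ l * pd (\<lambda>y. wc a b y $ l) k x + pd (\<lambda>y. a y $ i $ l) k x * wc a b x $ l"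
    by (rule pd_mult[OF da[OF x] dwc[OF x]])
  ultimately show ?thesis by simp
qed

lemma dns_eq: "x \<in> U \<Longrightarrow> pd (norm_sq a b) k x =
   (\<Sum>i\<in>UNIV. b x $ i * pd (\<lambda>y. wc a b y $ i) k x + pd (\<lambda>y. b y $ i) k x * wc a b x $ i)"
proof -
  assume x: "x \<in> U"
  have "pd (norm_sq a b) k x = pd (\<lambda>y. \<Sum>i\<in>UNIV. b y $ i * wc a b y $ i) k x"
    by (rule pd_cong_open[OF U x]) (simp_all add: ns_eq dns[OF x])
  also have "\<dots> = (\<Sum>i\<in>UNIV. pd (\<lambda>y. b y $ i * wc a b y $ i) k x)"
    by (rule pd_sum) (intro differentiable_mult db[OF x] dwc[OF x])
  also have "\<dots> = (\<Sum>i\<in>UNIV. b x $ i * pd (\<lambda>y. wc a b y $ i) k x + pd (\<lambda>y. b y $ i) k x * wc a b x $ i)"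
    by (intro sum.cong refl pd_mult db[OF x] dwc[OF x])
  finally show ?thesis .
qed

lemma chr: "x \<in> U \<Longrightarrow> (\<Sum>k\<in>UNIV. christoffel a k i j x * b x $ k) =
   1/2 * (\<Sum>l\<in>UNIV. wc a b x $ l * (pd (\<lambda>y. a y $ l $ j) i x + pd (\<lambda>y. a y $ l $ i) j x - pd (\<lambda>y. a y $ i $ j) l x))"
proof -
  assume x: "x \<in> U"
  define T where "T l = pd (\<lambda>y. a y $ l $ j) i x + pd (\<lambda>y. a y $ l $ i) j x - pd (\<lambda>y. a y $ i $ j) l x" for l
  define N where "N = matrix_inv (a x)"
  have "(\<Sum>k\<in>UNIV. christoffel a k i j x * b x $ k) = (\<Sum>k\<in>UNIV. (1/2 * (\<Sum>l\<in>UNIV. N $ k $ l * T l)) * b x $ k)"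
    by (simp add: christoffel_def T_def N_def)
  also have "\<dots> = 1/2 * (\<Sum>k\<in>UNIV. \<Sum>l\<in>UNIV. N $ k $ l * b x $ k * T l)"
    by (simp add: sum_distrib_left sum_distrib_right mult_ac)
  also have "\<dots> = 1/2 * (\<Sum>l\<in>UNIV. \<Sum>k\<in>UNIV. N $ k $ l * b x $ k * T l)"
    by (subst sum.swap) (rule refl)
  also have "\<dots> = 1/2 * (\<Sum>l\<in>UNIV. (\<Sum>k\<in>UNIV. N $ k $ l * b x $ k) * T l)"
    by (simp add: sum_distrib_right)
  also have "\<dots> = 1/2 * (\<Sum>l\<in>UNIV. wc a b x $ l * T l)"
    unfolding N_def using matrix_inv_sym_apply[OF a_inv[OF x] asym[OF x] wc_eq[OF x]] by simp
  finally show ?thesis by (simp add: T_def)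
qed

lemma dasym: "x \<in> U \<Longrightarrow> pd (\<lambda>y. a y $ i $ j) k x = pd (\<lambda>y. a y $ j $ i) k x"
  by (rule pd_cong_open[OF U], assumption) (simp_all add: asym da)

lemma H1: "x \<in> U \<Longrightarrow> pd (\<lambda>y. b y $ i) j x = c x * a x $ i $ j +
   1/2 * (\<Sum>l\<in>UNIV. wc a b x $ l * (pd (\<lambda>y. a y $ l $ j) i x + pd (\<lambda>y. a y $ l $ i) j x - pd (\<lambda>y. a y $ i $ j) l x))"
  using cc[of x i j] chr[of x i j] by (simp add: covd_def)

lemma ds: "x \<in> U \<Longrightarrow> pd (norm_sq a b) k x = 2 * c x * b x $ k"
proof -
  assume x: "x \<in> U"
  have "(\<Sum>i\<in>UNIV. b x $ i * pd (\<lambda>y. wc a b y $ i) k x + pd (\<lambda>y. b y $ i) k x * wc a b x $ i) = 2 * c x * b x $ k"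
  proof (rule alg_ds[where A="\<lambda>i j. a x $ i $ j" and D="\<lambda>m i j. pd (\<lambda>y. a y $ i $ j) m x"])
    show "\<And>i j. a x $ i $ j = a x $ j $ i" by (rule asym[OF x])
    show "\<And>i. b x $ i = (\<Sum>l\<in>UNIV. a x $ i $ l * wc a b x $ l)"
      using wc_eq[OF x] by (simp add: matrix_vector_mult_def vec_eq_iff)
    show "\<And>i. (\<Sum>l\<in>UNIV. pd (\<lambda>y. a y $ i $ l) k x * wc a b x $ l + a x $ i $ l * pd (\<lambda>y. wc a b y $ l) k x) =
          pd (\<lambda>y. b y $ i) k x"
      using dwid[OF x] by (simp add: add.commute)
    show "\<And>i. pd (\<lambda>y. b y $ i) k x = c x * a x $ i $ k + 1/2 * (\<Sum>l\<in>UNIV. wc a b x $ l *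
      (pd (\<lambda>y. a y $ l $ k) i x + pd (\<lambda>y. a y $ l $ i) k x - pd (\<lambda>y. a y $ i $ k) l x))"
      by (rule H1[OF x])
  qed
  then show ?thesis using dns_eq[OF x] by simp
qed

lemma closed: "x \<in> U \<Longrightarrow> pd (\<lambda>y. b y $ i) j x = pd (\<lambda>y. b y $ j) i x"
proof -
  assume x: "x \<in> U"
  have "\<And>l. pd (\<lambda>y. a y $ i $ j) l x = pd (\<lambda>y. a y $ j $ i) l x" by (rule dasym[OF x])
  then show ?thesis using H1[OF x, of i j] H1[OF x, of j i] asym[OF x, of i j] by (simp add: add.commute)
qed

end

locale setup2 = setup1 +
  fixes \<kappa> \<rho> \<nu> :: "real \<Rightarrow> real" and I :: "real set"
  assumes I: "open I" and sI: "\<And>x. x \<in> U \<Longrightarrow> norm_sq a b x \<in> I"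
    and dk: "\<And>t. t \<in> I \<Longrightarrow> \<kappa> differentiable (at t)"
    and dr: "\<And>t. t \<in> I \<Longrightarrow> \<rho> differentiable (at t)"
    and dn: "\<And>t. t \<in> I \<Longrightarrow> \<nu> differentiable (at t)"
    and pos: "\<And>x. x \<in> U \<Longrightarrow> 1 - \<kappa> (norm_sq a b x) * norm_sq a b x > 0"
begin

lemma Dk: "x \<in> U \<Longrightarrow> (\<kappa> has_real_derivative deriv \<kappa> (norm_sq a b x)) (at (norm_sq a b x))"
  using dk[OF sI] DERIV_deriv_iff_real_differentiable by blast
lemma Dr: "x \<in> U \<Longrightarrow> (\<rho> has_real_derivative deriv \<rho> (norm_sq a b x)) (at (norm_sq a b x))"
  using dr[OF sI] DERIV_deriv_iff_real_differentiable by blast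
lemma Dn: "x \<in> U \<Longrightarrow> (\<nu> has_real_derivative deriv \<nu> (norm_sq a b x)) (at (norm_sq a b x))"
  using dn[OF sI] DERIV_deriv_iff_real_differentiable by blast

lemma DE: "x \<in> U \<Longrightarrow> ((\<lambda>t. exp (2 * \<rho> t)) has_real_derivative
    exp (2 * \<rho> (norm_sq a b x)) * (2 * deriv \<rho> (norm_sq a b x))) (at (norm_sq a b x))"
  by (rule derivative_eq_intros Dr refl | simp)+

lemma dAbar: "x \<in> U \<Longrightarrow> pd (\<lambda>y. deformed_metric \<kappa> \<rho> a b y $ p $ q) m x =
   exp (2 * \<rho> (norm_sq a b x)) * (2 * c x * (2 * deriv \<rho> (norm_sq a b x)) * b x $ m *
     (a x $ p $ q - \<kappa> (norm_sq a b x) * b x $ p * b x $ q) + pd (\<lambda>y. a y $ p $ q) m x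
     - 2 * c x * deriv \<kappa> (norm_sq a b x) * b x $ m * b x $ p * b x $ q
     - \<kappa> (norm_sq a b x) * (pd (\<lambda>y. b y $ p) m x * b x $ q + b x $ p * pd (\<lambda>y. b y $ q) m x))"
proof -
  assume x: "x \<in> U"
  define sx where "sx = norm_sq a b x"
  have fe: "(\<lambda>y. deformed_metric \<kappa> \<rho> a b y $ p $ q) =
     (\<lambda>y. exp (2 * \<rho> (norm_sq a b y)) * (a y $ p $ q - \<kappa> (norm_sq a b y) * b y $ p * b y $ q))"
    by (simp add: deformed_metric_def)
  have dE: "(\<lambda>y. exp (2 * \<rho> (norm_sq a b y))) differentiable (at x)"
    by (rule comp_diff[OF DE[OF x] dns[OF x]])
  have dK: "(\<lambda>y. \<kappa> (norm_sq a b y)) differentiable (at x)"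
    by (rule comp_diff[OF Dk[OF x] dns[OF x]])
  have pE: "pd (\<lambda>y. exp (2 * \<rho> (norm_sq a b y))) m x = exp (2 * \<rho> sx) * (2 * deriv \<rho> sx) * (2 * c x * b x $ m)"
    using pd_comp[OF DE[OF x] dns[OF x]] ds[OF x] by (simp add: sx_def)
  have pK: "pd (\<lambda>y. \<kappa> (norm_sq a b y)) m x = deriv \<kappa> sx * (2 * c x * b x $ m)"
    using pd_comp[OF Dk[OF x] dns[OF x]] ds[OF x] by (simp add: sx_def)
  have dKb: "(\<lambda>y. \<kappa> (norm_sq a b y) * b y $ p) differentiable (at x)"
    by (intro differentiable_mult dK db[OF x])
  have pKb: "pd (\<lambda>y. \<kappa> (norm_sq a b y) * b y $ p) m x =
      \<kappa> sx * pd (\<lambda>y. b y $ p) m x + deriv \<kappa> sx * (2 * c x * b x $ m) * b x $ p"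
    using pd_mult[OF dK db[OF x]] pK by (simp add: sx_def)
  have dKbb: "(\<lambda>y. \<kappa> (norm_sq a b y) * b y $ p * b y $ q) differentiable (at x)"
    by (intro differentiable_mult dKb db[OF x])
  have pKbb: "pd (\<lambda>y. \<kappa> (norm_sq a b y) * b y $ p * b y $ q) m x =
      \<kappa> sx * b x $ p * pd (\<lambda>y. b y $ q) m x +
      (\<kappa> sx * pd (\<lambda>y. b y $ p) m x + deriv \<kappa> sx * (2 * c x * b x $ m) * b x $ p) * b x $ q"
    using pd_mult[OF dKb db[OF x]] pKb by (simp add: sx_def)
  have dg: "(\<lambda>y. a y $ p $ q - \<kappa> (norm_sq a b y) * b y $ p * b y $ q) differentiable (at x)"
    by (intro differentiable_diff da[OF x] dKbb)
  have pg: "pd (\<lambda>y. a y $ p $ q - \<kappa> (norm_sq a b y) * b y $ p * b y $ q) m x =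
      pd (\<lambda>y. a y $ p $ q) m x - (\<kappa> sx * b x $ p * pd (\<lambda>y. b y $ q) m x +
      (\<kappa> sx * pd (\<lambda>y. b y $ p) m x + deriv \<kappa> sx * (2 * c x * b x $ m) * b x $ p) * b x $ q)"
    using pd_diff[OF da[OF x] dKbb] pKbb by simp
  show ?thesis
    unfolding fe pd_mult[OF dE dg] pg pE sx_def[symmetric]
    by (simp add: algebra_simps)
qed

lemma dbbar: "x \<in> U \<Longrightarrow> pd (\<lambda>y. deformed_form \<nu> a b y $ i) j x =
   deriv \<nu> (norm_sq a b x) * (2 * c x * b x $ j) * b x $ i + \<nu> (norm_sq a b x) * pd (\<lambda>y. b y $ i) j x"
proof -
  assume x: "x \<in> U"
  have fe: "(\<lambda>y. deformed_form \<nu> a b y $ i) = (\<lambda>y. \<nu> (norm_sq a b y) * b y $ i)"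
    by (simp add: deformed_form_def)
  have dN: "(\<lambda>y. \<nu> (norm_sq a b y)) differentiable (at x)"
    by (rule comp_diff[OF Dn[OF x] dns[OF x]])
  show ?thesis
    unfolding fe pd_mult[OF dN db[OF x]] pd_comp[OF Dn[OF x] dns[OF x]] ds[OF x]
    by (simp add: algebra_simps)
qed

lemma abar_sym: "x \<in> U \<Longrightarrow> deformed_metric \<kappa> \<rho> a b x $ i $ j = deformed_metric \<kappa> \<rho> a b x $ j $ i"
  by (simp add: deformed_metric_def asym mult_ac)

lemma WA: "x \<in> U \<Longrightarrow> (\<Sum>i\<in>UNIV. wc a b x $ i * a x $ i $ j) = b x $ j"
proof -
  assume x: "x \<in> U"
  have "b x $ j = (\<Sum>l\<in>UNIV. a x $ j $ l * wc a b x $ l)"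
    using wc_eq[OF x] by (simp add: matrix_vector_mult_def vec_eq_iff)
  then show ?thesis by (simp add: asym[OF x] mult.commute)
qed

lemma abar_mul: "x \<in> U \<Longrightarrow> deformed_metric \<kappa> \<rho> a b x *v
   ((\<nu> (norm_sq a b x) / (exp (2 * \<rho> (norm_sq a b x)) * (1 - \<kappa> (norm_sq a b x) * norm_sq a b x))) *\<^sub>R wc a b x)
   = deformed_form \<nu> a b x"
proof -
  assume x: "x \<in> U"
  define sx where "sx = norm_sq a b x"
  define E where "E = exp (2 * \<rho> sx)"
  define K where "K = \<kappa> sx"
  have d: "1 - K * sx \<noteq> 0" using pos[OF x] by (simp add: K_def sx_def)
  have E0: "E \<noteq> 0" by (simp add: E_def)
  have sxe: "sx = (\<Sum>l\<in>UNIV. b x $ l * wc a b x $ l)" by (simp add: sx_def ns_eq[OF x])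
  have row: "(\<Sum>j\<in>UNIV. (a x $ i $ j - K * b x $ i * b x $ j) * wc a b x $ j) = (1 - K * sx) * b x $ i" for i
  proof -
    have "(\<Sum>j\<in>UNIV. (a x $ i $ j - K * b x $ i * b x $ j) * wc a b x $ j) =
        (\<Sum>j\<in>UNIV. a x $ i $ j * wc a b x $ j) - K * b x $ i * (\<Sum>j\<in>UNIV. b x $ j * wc a b x $ j)"
      by (simp add: algebra_simps sum_subtractf sum_distrib_left)
    also have "\<dots> = b x $ i - K * b x $ i * sx"
      using wc_eq[OF x] sxe by (simp add: matrix_vector_mult_def vec_eq_iff)
    finally show ?thesis by (simp add: algebra_simps)
  qed
  show ?thesis
  proof (simp add: vec_eq_iff, intro allI)
    fix i
    have "(deformed_metric \<kappa> \<rho> a b x *v ((\<nu> sx / (E * (1 - K * sx))) *\<^sub>R wc a b x)) $ i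
       = \<nu> sx / (E * (1 - K * sx)) * E * (\<Sum>j\<in>UNIV. (a x $ i $ j - K * b x $ i * b x $ j) * wc a b x $ j)"
      by (simp add: matrix_vector_mult_def deformed_metric_def E_def K_def sx_def[symmetric] sum_distrib_left mult_ac)
    also have "\<dots> = \<nu> sx * b x $ i" unfolding row using d E0 by (simp add: field_simps)
    finally show "(deformed_metric \<kappa> \<rho> a b x *v ((\<nu> (norm_sq a b x) / (exp (2 * \<rho> (norm_sq a b x)) *
       (1 - \<kappa> (norm_sq a b x) * norm_sq a b x))) *\<^sub>R wc a b x)) $ i = deformed_form \<nu> a b x $ i"
      by (simp add: deformed_form_def E_def K_def sx_def)
  qed
qed

lemma abar_inv: "x \<in> U \<Longrightarrow> invertible (deformed_metric \<kappa> \<rho> a b x)"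
proof -
  assume x: "x \<in> U"
  define sx where "sx = norm_sq a b x"
  define E where "E = exp (2 * \<rho> sx)"
  define K where "K = \<kappa> sx"
  have d: "1 - K * sx \<noteq> 0" using pos[OF x] by (simp add: K_def sx_def)
  have E0: "E \<noteq> 0" by (simp add: E_def)
  have sxe: "sx = (\<Sum>l\<in>UNIV. b x $ l * wc a b x $ l)" by (simp add: sx_def ns_eq[OF x])
  have z: "v = 0" if v: "deformed_metric \<kappa> \<rho> a b x *v v = 0" for v
  proof -
    define \<beta> where "\<beta> = (\<Sum>j\<in>UNIV. b x $ j * v $ j)"
    have r: "(\<Sum>j\<in>UNIV. a x $ i $ j * v $ j) = K * b x $ i * \<beta>" for i
    proof -
      have "0 = (deformed_metric \<kappa> \<rho> a b x *v v) $ i" using v by simp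
      also have "\<dots> = E * ((\<Sum>j\<in>UNIV. a x $ i $ j * v $ j) - K * b x $ i * \<beta>)"
        by (simp add: matrix_vector_mult_def deformed_metric_def E_def K_def sx_def[symmetric] \<beta>_def
            sum_distrib_left sum_subtractf algebra_simps)
      finally show ?thesis using E0 by simp
    qed
    have "(\<Sum>i\<in>UNIV. wc a b x $ i * (\<Sum>j\<in>UNIV. a x $ i $ j * v $ j)) = (\<Sum>j\<in>UNIV. (\<Sum>i\<in>UNIV. wc a b x $ i * a x $ i $ j) * v $ j)"
    proof -
      have "(\<Sum>i\<in>UNIV. wc a b x $ i * (\<Sum>j\<in>UNIV. a x $ i $ j * v $ j)) = (\<Sum>i\<in>UNIV. \<Sum>j\<in>UNIV. wc a b x $ i * a x $ i $ j * v $ j)"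
        by (simp add: sum_distrib_left mult.assoc)
      also have "\<dots> = (\<Sum>j\<in>UNIV. \<Sum>i\<in>UNIV. wc a b x $ i * a x $ i $ j * v $ j)" by (rule sum.swap)
      also have "\<dots> = (\<Sum>j\<in>UNIV. (\<Sum>i\<in>UNIV. wc a b x $ i * a x $ i $ j) * v $ j)" by (simp add: sum_distrib_right)
      finally show ?thesis .
    qed
    also have "\<dots> = \<beta>" by (simp add: WA[OF x] \<beta>_def)
    finally have "\<beta> = (\<Sum>i\<in>UNIV. wc a b x $ i * (K * b x $ i * \<beta>))" by (simp add: r)
    also have "\<dots> = K * sx * \<beta>" by (simp add: sxe sum_distrib_left sum_distrib_right mult_ac)
    finally have "\<beta> * (1 - K * sx) = 0" by (simp add: algebra_simps)
    then have "\<beta> = 0" using d by simp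
    then have "a x *v v = 0" using r by (simp add: vec_eq_iff matrix_vector_mult_def)
    then show "v = 0" by (rule a_inj[OF x])
  qed
  have "inj ((*v) (deformed_metric \<kappa> \<rho> a b x))"
  proof (rule injI)
    fix u v assume "deformed_metric \<kappa> \<rho> a b x *v u = deformed_metric \<kappa> \<rho> a b x *v v"
    then have "deformed_metric \<kappa> \<rho> a b x *v (u - v) = 0" by (simp add: matrix_vector_mult_diff_distrib)
    then have "u - v = 0" by (rule z)
    then show "u = v" by simp
  qed
  then show ?thesis using matrix_left_invertible_injective invertible_left_inverse by blast
qed


definition "Pc x = \<nu> (norm_sq a b x) * (1 + (2 * deriv \<rho> (norm_sq a b x)) * norm_sq a b x) /
   (1 - \<kappa> (norm_sq a b x) * norm_sq a b x)"
definition "Phi x = 2 * deriv \<nu> (norm_sq a b x) - 2 * \<nu> (norm_sq a b x) * (2 * deriv \<rho> (norm_sq a b x))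
   + \<nu> (norm_sq a b x) * (\<kappa> (norm_sq a b x) + norm_sq a b x * deriv \<kappa> (norm_sq a b x)) /
   (1 - \<kappa> (norm_sq a b x) * norm_sq a b x)"

lemma covd_bar: "x \<in> U \<Longrightarrow> covd (deformed_metric \<kappa> \<rho> a b) (deformed_form \<nu> a b) i j x =
   c x * Pc x * (a x $ i $ j - \<kappa> (norm_sq a b x) * b x $ i * b x $ j) + c x * Phi x * b x $ i * b x $ j"
proof -
  assume x: "x \<in> U"
  define sx where "sx = norm_sq a b x"
  have Ks: "1 - \<kappa> sx * sx \<noteq> 0" using pos[OF x] by (simp add: sx_def)
  have E: "exp (2 * \<rho> sx) \<noteq> 0" by simp
  have sd: "sx = (\<Sum>l\<in>UNIV. b x $ l * wc a b x $ l)" by (simp add: sx_def ns_eq[OF x])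
  have Bd: "\<And>i. b x $ i = (\<Sum>l\<in>UNIV. a x $ i $ l * wc a b x $ l)"
    using wc_eq[OF x] by (simp add: matrix_vector_mult_def vec_eq_iff)
  note AM = alg_main[where A="\<lambda>i j. a x $ i $ j" and D="\<lambda>m p q. pd (\<lambda>y. a y $ p $ q) m x"
      and dAb="\<lambda>m p q. pd (\<lambda>y. deformed_metric \<kappa> \<rho> a b y $ p $ q) m x"
      and W="\<lambda>l. wc a b x $ l" and B="\<lambda>i. b x $ i" and dB="\<lambda>m p. pd (\<lambda>y. b y $ p) m x"
      and dbb="\<lambda>i j. pd (\<lambda>y. deformed_form \<nu> a b y $ i) j x" and sv=sx and c="c x" and K="\<kappa> sx"
      and E="exp (2 * \<rho> sx)" and r="2 * deriv \<rho> sx" and qq="deriv \<kappa> sx" and nn="deriv \<nu> sx"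
      and N="\<nu> sx" and i=i and j=j, OF asym[OF x] Bd sd H1[OF x] closed[OF x] Ks E
      dAbar[OF x, unfolded sx_def[symmetric]] dbbar[OF x, unfolded sx_def[symmetric]]]
  note CH = chr_gen[where M="deformed_metric \<kappa> \<rho> a b" and x=x, OF abar_inv[OF x] abar_sym[OF x] abar_mul[OF x], of i j]
  show ?thesis
    unfolding covd_def CH using AM by (simp add: sx_def Pc_def Phi_def mult_ac)
qed

end


context setup2 begin

lemma dR: "x \<in> U \<Longrightarrow> ((\<lambda>t. sqrt (1 - t * \<kappa> t)) has_real_derivative
   inverse (sqrt (1 - norm_sq a b x * \<kappa> (norm_sq a b x))) / 2 *
     (- (\<kappa> (norm_sq a b x) + norm_sq a b x * deriv \<kappa> (norm_sq a b x)))) (at (norm_sq a b x))"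
proof -
  assume x: "x \<in> U"
  define sx where "sx = norm_sq a b x"
  have L: "((\<lambda>t. 1 - t * \<kappa> t) has_real_derivative - (\<kappa> sx + sx * deriv \<kappa> sx)) (at sx)"
    by (rule DERIV_cong[OF DERIV_diff[OF DERIV_const DERIV_mult[OF DERIV_ident Dk[OF x, folded sx_def]]]])
      (simp add: algebra_simps)
  have p: "0 < 1 - sx * \<kappa> sx" using pos[OF x] by (simp add: sx_def mult.commute)
  show ?thesis using DERIV_chain2[OF DERIV_real_sqrt[OF p] L] by (simp add: sx_def)
qed

lemma fw_pt:
  assumes x: "x \<in> U" and card: "CARD('a) \<ge> 2"
    and eq: "\<And>i j. covd (deformed_metric \<kappa> \<rho> a b) (deformed_form \<nu> a b) i j x = cb * deformed_metric \<kappa> \<rho> a b x $ i $ j"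
  shows "c x * Phi x * b x $ k = 0"
proof -
  define E where "E = exp (2 * \<rho> (norm_sq a b x))"
  define K where "K = \<kappa> (norm_sq a b x)"
  define lam where "lam = c x * Pc x - cb * E"
  define mu where "mu = c x * Phi x"
  have e: "lam * (a x $ i $ j - K * b x $ i * b x $ j) + mu * b x $ i * b x $ j = 0" for i j
    using eq[of i j] covd_bar[OF x, of i j]
    by (simp add: lam_def mu_def E_def K_def deformed_metric_def algebra_simps)
  show ?thesis
  proof (cases "\<forall>k. b x $ k = 0")
    case True then show ?thesis by simp
  next
    case False
    then obtain k0 where k0: "b x $ k0 \<noteq> 0" by blast
    obtain v where v: "v \<noteq> 0" "b x \<bullet> v = 0" using exists_orth[OF card] by blast
    have bv: "(\<Sum>j\<in>UNIV. b x $ j * v $ j) = 0" using v(2) by (simp add: inner_vec_def)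
    have "a x *v v \<noteq> 0" using a_inj[OF x] v(1) by blast
    then obtain i0 where i0: "(\<Sum>j\<in>UNIV. a x $ i0 $ j * v $ j) \<noteq> 0"
      by (auto simp: vec_eq_iff matrix_vector_mult_def)
    have "0 = (\<Sum>j\<in>UNIV. (lam * (a x $ i0 $ j - K * b x $ i0 * b x $ j) + mu * b x $ i0 * b x $ j) * v $ j)"
      by (simp add: e)
    also have "\<dots> = lam * (\<Sum>j\<in>UNIV. a x $ i0 $ j * v $ j) + (mu - lam * K) * b x $ i0 * (\<Sum>j\<in>UNIV. b x $ j * v $ j)"
      by (simp add: algebra_simps sum.distrib sum_subtractf sum_distrib_left)
    finally have "lam = 0" using bv i0 by simp
    then have "mu * b x $ k0 * b x $ k0 = 0" using e[of k0 k0] by simp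
    then have "mu = 0" using k0 by simp
    then show ?thesis by (simp add: mu_def)
  qed
qed

definition "Fq y = \<nu> (norm_sq a b y) / (sqrt (1 - norm_sq a b y * \<kappa> (norm_sq a b y)) * exp (2 * \<rho> (norm_sq a b y)))"

lemma F_zero:
  assumes x: "x \<in> U" and z: "\<And>k. c x * Phi x * b x $ k = 0"
  shows "(Fq has_derivative (\<lambda>h. 0)) (at x)"
proof -
  define sx where "sx = norm_sq a b x"
  define R where "R = sqrt (1 - sx * \<kappa> sx)"
  define e where "e = exp (2 * \<rho> sx)"
  have Rp: "R > 0" using pos[OF x] by (simp add: R_def sx_def mult.commute)
  have RR: "R * R = 1 - sx * \<kappa> sx" using pos[OF x] by (simp add: R_def sx_def mult.commute)
  have e0: "e \<noteq> 0" by (simp add: e_def)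
  define G where "G = (deriv \<nu> sx * (R*e) - \<nu> sx * ((inverse R / 2 * (-(\<kappa> sx + sx * deriv \<kappa> sx))) * e
      + (e * (2 * deriv \<rho> sx)) * R)) / ((R*e)*(R*e))"
  have DG: "((\<lambda>t. \<nu> t / (sqrt (1 - t * \<kappa> t) * exp (2 * \<rho> t))) has_real_derivative G) (at sx)"
  proof -
    have "((\<lambda>t. sqrt (1 - t * \<kappa> t) * exp (2 * \<rho> t)) has_real_derivative
       (inverse R / 2 * (-(\<kappa> sx + sx * deriv \<kappa> sx))) * e + (e * (2 * deriv \<rho> sx)) * R) (at sx)"
      using DERIV_mult[OF dR[OF x] DE[OF x]] by (simp add: sx_def R_def e_def)
    from DERIV_divide[OF Dn[OF x, folded sx_def] this] show ?thesis
      using Rp e0 by (simp add: G_def R_def e_def)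
  qed
  have G2: "G * (R*e) * 2 = Phi x"
    unfolding G_def Galg[OF Rp e0 RR] by (simp add: Phi_def sx_def[symmetric] mult.commute)
  have Fe: "Fq = (\<lambda>y. (\<lambda>t. \<nu> t / (sqrt (1 - t * \<kappa> t) * exp (2 * \<rho> t))) (norm_sq a b y))"
    by (simp add: Fq_def fun_eq_iff)
  have dF: "Fq differentiable (at x)"
    unfolding Fe by (rule comp_diff[OF DG[unfolded sx_def] dns[OF x]])
  have pF: "pd Fq j x = 0" for j
  proof -
    have "pd Fq j x = G * (2 * c x * b x $ j)"
      unfolding Fe pd_comp[OF DG[unfolded sx_def] dns[OF x]] ds[OF x] ..
    also have "\<dots> = 0"
    proof -
      have "G * (2 * c x * b x $ j) * (R * e) = c x * Phi x * b x $ j"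
        using G2 by (simp add: algebra_simps flip: G2)
      then have "G * (2 * c x * b x $ j) * (R * e) = 0" using z by simp
      then show ?thesis using Rp e0 by simp
    qed
    finally show ?thesis .
  qed
  show ?thesis using has_pd[OF dF] by (simp add: pF)
qed

lemma bw_pt:
  assumes x: "x \<in> U"
    and eqC: "\<And>y. y \<in> U \<Longrightarrow> \<nu> (norm_sq a b y) = C * sqrt (1 - norm_sq a b y * \<kappa> (norm_sq a b y)) * exp (2 * \<rho> (norm_sq a b y))"
  shows "c x * Phi x * b x $ i * b x $ j = 0"
proof -
  define sx where "sx = norm_sq a b x"
  define R where "R = sqrt (1 - sx * \<kappa> sx)"
  define e where "e = exp (2 * \<rho> sx)"
  have Rp: "R > 0" using pos[OF x] by (simp add: R_def sx_def mult.commute)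
  have RR: "R * R = 1 - sx * \<kappa> sx" using pos[OF x] by (simp add: R_def sx_def mult.commute)
  define Ps where "Ps = (C * (inverse R / 2 * (-(\<kappa> sx + sx * deriv \<kappa> sx)))) * e + (e * (2 * deriv \<rho> sx)) * (C * R)"
  have DP: "((\<lambda>t. C * sqrt (1 - t * \<kappa> t) * exp (2 * \<rho> t)) has_real_derivative Ps) (at sx)"
    using DERIV_mult[OF DERIV_cmult[OF dR[OF x]] DE[OF x]] by (simp add: Ps_def sx_def R_def e_def)
  have dN: "(\<lambda>y. \<nu> (norm_sq a b y)) differentiable (at x)"
    by (rule comp_diff[OF Dn[OF x] dns[OF x]])
  have key: "deriv \<nu> sx * (2 * c x * b x $ k) = Ps * (2 * c x * b x $ k)" for k
  proof -
    have "pd (\<lambda>y. \<nu> (norm_sq a b y)) k x = pd (\<lambda>y. (\<lambda>t. C * sqrt (1 - t * \<kappa> t) * exp (2 * \<rho> t)) (norm_sq a b y)) k x"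
      by (rule pd_cong_open[OF U x _ dN]) (simp add: eqC)
    then show ?thesis
      unfolding pd_comp[OF Dn[OF x] dns[OF x]] pd_comp[OF DP[unfolded sx_def] dns[OF x]] ds[OF x]
      by (simp add: sx_def)
  qed
  show ?thesis
  proof (cases "\<forall>k. c x * b x $ k = 0")
    case True then show ?thesis by (metis mult.commute mult_zero_left mult.assoc)
  next
    case False
    then obtain k where k: "c x * b x $ k \<noteq> 0" by blast
    have nd: "deriv \<nu> sx = Ps" using key[of k] k by simp
    have Nv: "\<nu> sx = C * R * e" using eqC[OF x] by (simp add: sx_def R_def e_def)
    have "Phi x = 0"
      unfolding Phi_def sx_def[symmetric] nd Nv Ps_def
      using Palg[OF Rp RR, of C "\<kappa> sx + sx * deriv \<kappa> sx" e "deriv \<rho> sx"]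
      by (simp add: mult.commute)
    then show ?thesis by simp
  qed
qed

end
theorem proposition5p2:
  fixes U :: "(real^'n) set" and a :: "real^'n \<Rightarrow> real^'n^'n" and b :: "real^'n \<Rightarrow> real^'n"
    and \<kappa> \<rho> \<nu> :: "real \<Rightarrow> real" and I :: "real set"
  assumes dim: "CARD('n) \<ge> 2"
    and U: "open U" "connected U" "U \<noteq> {}"
    and a: "riemannian_metric U a"
    and b: "smooth_one_form U b"
    and cc: "closed_conformal U a b"
    and np: "\<not> parallel U a b"
    and I: "open I" "\<forall>x\<in>U. norm_sq a b x \<in> I"
    and sm: "smooth_real_on I \<kappa>" "smooth_real_on I \<rho>" "smooth_real_on I \<nu>"
    and pos: "\<forall>x\<in>U. 1 - \<kappa> (norm_sq a b x) * norm_sq a b x > 0"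
    and nz: "\<forall>x\<in>U. \<nu> (norm_sq a b x) \<noteq> 0"
  shows "closed_conformal U (deformed_metric \<kappa> \<rho> a b) (deformed_form \<nu> a b) \<longleftrightarrow>
    (\<exists>C::real. C \<noteq> 0 \<and> (\<forall>x\<in>U. \<nu> (norm_sq a b x) =
        C * sqrt (1 - norm_sq a b x * \<kappa> (norm_sq a b x)) * exp (2 * \<rho> (norm_sq a b x))))"
proof -
  obtain c where cc': "\<forall>x\<in>U. \<forall>i j. covd a b i j x = c x * a x $ i $ j"
    using cc unfolding closed_conformal_def by blast
  have dif: "\<And>f t. smooth_real_on I f \<Longrightarrow> t \<in> I \<Longrightarrow> f differentiable (at t)"
  proof -
    fix f t assume "smooth_real_on I f" "t \<in> I"
    then have "((deriv ^^ 0) f) differentiable_on I" unfolding smooth_real_on_def by blast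
    then show "f differentiable (at t)" using I(1) \<open>t \<in> I\<close> by (simp add: differentiable_on_eq_differentiable_at)
  qed
  interpret S: setup2 U a b c \<kappa> \<rho> \<nu> I
    apply unfold_locales
    using U(1) a b cc' I sm pos by (auto intro: dif)
  show ?thesis
  proof
    assume "closed_conformal U (deformed_metric \<kappa> \<rho> a b) (deformed_form \<nu> a b)"
    then obtain cb where cbh: "\<forall>x\<in>U. \<forall>i j. covd (deformed_metric \<kappa> \<rho> a b) (deformed_form \<nu> a b) i j x
        = cb x * deformed_metric \<kappa> \<rho> a b x $ i $ j"
      unfolding closed_conformal_def by blast
    have z: "\<And>x k. x \<in> U \<Longrightarrow> c x * S.Phi x * b x $ k = 0"
      using S.fw_pt[OF _ dim] cbh by blast
    obtain x0 where x0: "x0 \<in> U" using U(3) by blast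
    have Fd: "\<And>y. y \<in> U \<Longrightarrow> (S.Fq has_derivative (\<lambda>h. 0)) (at y)"
    proof -
      fix y assume y: "y \<in> U"
      show "(S.Fq has_derivative (\<lambda>h. 0)) (at y)" by (rule S.F_zero[OF y z[OF y]])
    qed
    have Fc: "\<And>x. x \<in> U \<Longrightarrow> S.Fq x = S.Fq x0"
      using has_derivative_zero_unique_connected[OF U(1) U(2) Fd _ x0] by blast
    define C where "C = S.Fq x0"
    have R0: "\<And>x. x \<in> U \<Longrightarrow> sqrt (1 - norm_sq a b x * \<kappa> (norm_sq a b x)) > 0"
      using pos by (simp add: mult.commute)
    have "C \<noteq> 0" using nz x0 R0[OF x0] by (simp add: C_def S.Fq_def)
    moreover have "\<forall>x\<in>U. \<nu> (norm_sq a b x) =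
        C * sqrt (1 - norm_sq a b x * \<kappa> (norm_sq a b x)) * exp (2 * \<rho> (norm_sq a b x))"
    proof
      fix x assume x: "x \<in> U"
      have "S.Fq x = C" using Fc[OF x] by (simp add: C_def)
      then show "\<nu> (norm_sq a b x) =
        C * sqrt (1 - norm_sq a b x * \<kappa> (norm_sq a b x)) * exp (2 * \<rho> (norm_sq a b x))"
        using R0[OF x] by (auto simp: S.Fq_def field_simps)
    qed
    ultimately show "\<exists>C. C \<noteq> 0 \<and> (\<forall>x\<in>U. \<nu> (norm_sq a b x) =
        C * sqrt (1 - norm_sq a b x * \<kappa> (norm_sq a b x)) * exp (2 * \<rho> (norm_sq a b x)))" by blast
  next
    assume "\<exists>C. C \<noteq> 0 \<and> (\<forall>x\<in>U. \<nu> (norm_sq a b x) =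
        C * sqrt (1 - norm_sq a b x * \<kappa> (norm_sq a b x)) * exp (2 * \<rho> (norm_sq a b x)))"
    then obtain C where C: "\<And>y. y \<in> U \<Longrightarrow> \<nu> (norm_sq a b y) =
        C * sqrt (1 - norm_sq a b y * \<kappa> (norm_sq a b y)) * exp (2 * \<rho> (norm_sq a b y))" by blast
    show "closed_conformal U (deformed_metric \<kappa> \<rho> a b) (deformed_form \<nu> a b)"
      unfolding closed_conformal_def
    proof (intro exI[of _ "\<lambda>x. c x * S.Pc x / exp (2 * \<rho> (norm_sq a b x))"] ballI allI)
      fix x i j assume x: "x \<in> U"
      have "c x * S.Phi x * b x $ i * b x $ j = 0" by (rule S.bw_pt[OF x C])
      then show "covd (deformed_metric \<kappa> \<rho> a b) (deformed_form \<nu> a b) i j x =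
          c x * S.Pc x / exp (2 * \<rho> (norm_sq a b x)) * deformed_metric \<kappa> \<rho> a b x $ i $ j"
        using S.covd_bar[OF x, of i j] by (simp add: deformed_metric_def)
    qed
  qed
qed

end
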